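(* Let $A \in \mathbb{C}^{m\times n}$, let $k$ be an integer with $1\le k\le\min\{m,n\}$, and let $\rho\in(0,1)$. Let $\Pi$ be the $n\times n$ column permutation matrix output by the CCEQR algorithm (described in the context) on input $(A,k,\rho)$. Then there exists a unitary $Q\in\mathbb{C}^{m\times m}$ such that $Q^*A\Pi$ has $\mathrm{GB}(k)$ form.
   Context: $\mathrm{GB}(k)$ form: a matrix $R\in\mathbb{C}^{m\times n}$ has $\mathrm{GB}(k)$ form ($0\le k\le\min\{m,n\}$) if its first $k$ columns are upper-triangular and $|R(i,i)| = \max_{i\le j\le n}\|R(i:m,j)\|_2$ for $1\le i\le k$. Householder reflection at step $i$ on $\mathbb{C}^p$: a unitary $I-\tau vv^*$, $\tau\ge0$ real, $v(1..i-1)=0$, $v(i)=1$, mapping a given $x$ to $[x(1),\dots,x(i-1),\mu',0,\dots,0]$ with $|\mu'|=\|x(i:p)\|_2$. Golub–Businger algorithm on $B\in\mathbb{C}^{p\times b}$ for $d\le\min\{p,b\}$ steps: $R\leftarrow B$; for $i=1..d$ choose $j_{\max}\in\arg\max_{j\ge i}\|R(i:p,j)\|_2$, swap columns $i,j_{\max}$ (recorded in a permutation $\widehat P$), let $H_i$ be the step-$i$ Householder reflection zeroing entries $(i+1):p$ of column $i$, set $R\leftarrow H_iR$; output $\widehat R = H_d\cdots H_1B\widehat P$. CCEQR algorithm on $(A,k,\rho)$. It maintains a permutation $\Pi$, a unitary $Q$, integers $s$ ("committed" count) and $t$ ("tracked" count) with $s+t\le n$, and a number $\mu$. Column positions $1..s$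 are committed, $s+1..s+t$ tracked, $s+t+1..n$ untracked. Define $\gamma(j)=\|(Q^*A\Pi)((s+1):m,\,j)\|_2^2$ for $s<j\le s+t$ (the squared norm of the component of $A\Pi(:,j)$ orthogonal to the range of $A\Pi(:,1:s)$) and $\gamma(j)=\|A\Pi(:,j)\|_2^2$ for $j>s+t$. Initialize $Q=I_m$, $\Pi=I_n$, $s=0$, $t=n$, $\mu=0$. While $s<k$, perform a cycle: (Collect) Let $b=1+\lfloor\rho(t-1)\rfloor$. Let the candidates be $b$ indices of $\{s+1,\dots,s+t\}$ with the largest values of $\gamma$, and let $\delta$ be the largest $\gamma(j)$ over the non-candidate indices of $\{s+1,\dots,s+t\}$ ($\delta=0$ if $b=t$). In the first cycle only, then set $t\leftarrow b$ (non-candidates become untracked). Apply $d=\min\{m-s,b\}$ steps of the Golub–Businger algorithm to $B=(Q^*A\Pi)((s+1):m,\ \text{candidates})$, obtaining $\widehat P$, $H_1,\dots,H_d$, $\widehat R$. Update $\Pi$ by moving the candidate columns to positions $s+1,\dots,s+b$ in the order given by $\widehat P$, placing the other tracked columns in positions $s+b+1,\dots,s+t$ and leaving all other positions unchanged. (Commit) Let $c=\max\{i\in\{1,\dots,d\}: |\widehat R(i,i)|^2\ge\max(\delta,\mu)\}$. Set $Q\leftarrow Q\,\mathrm{diag}(I_s,\,H_1H_2\cdots H_c)$, $s\leftarrow s+c$, $t\leftarrow t-c$. If $s\ge k$, stop and output $\Pi$. (Expand) Let $M=\max_{s<j\le s+t}\gamma(j)$ (with $M=0$ if $t=0$). Let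 $U$ be the set of untracked positions $j>s+t$ with $\|A\Pi(:,j)\|_2^2\ge M$; if $U$ is empty and untracked positions exist, instead let $U$ be the untracked positions with $\|A\Pi(:,j)\|_2^2\ge 0.9$ times the largest squared norm among untracked columns. Permute these columns to positions $s+t+1,\dots,s+t+|U|$ (leaving committed and tracked positions unchanged), set $t\leftarrow t+|U|$, and set $\mu$ to the largest $\|A\Pi(:,j)\|_2^2$ over the remaining untracked positions ($\mu=0$ if none). *)

theory Defs
  imports Complex_Main "Jordan_Normal_Form.Matrix"
begin

(* All indices are 0-based: row/column position r of the paper is r-1 here. *)

definition mat_adj :: "complex mat \<Rightarrow> complex mat" where
  "mat_adj M = mat (dim_col M) (dim_row M) (\<lambda>(i,j). cnj (M $$ (j,i)))"

definition unitary_mat :: "complex mat \<Rightarrow> bool" where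
  "unitary_mat U \<longleftrightarrow> dim_row U = dim_col U \<and> mat_adj U * U = 1\<^sub>m (dim_row U)"

definition colnorm2 :: "complex mat \<Rightarrow> nat \<Rightarrow> nat \<Rightarrow> real" where
  "colnorm2 M r j = (\<Sum>i\<in>{r..<dim_row M}. (cmod (M $$ (i,j)))\<^sup>2)"

definition GB_form :: "nat \<Rightarrow> complex mat \<Rightarrow> bool" where
  "GB_form k R \<longleftrightarrow> k \<le> min (dim_row R) (dim_col R)
     \<and> (\<forall>j<k. \<forall>i. j < i \<and> i < dim_row R \<longrightarrow> R $$ (i,j) = 0)
     \<and> (\<forall>i<k. cmod (R $$ (i,i)) = Max ((\<lambda>j. sqrt (colnorm2 R i j)) ` {i..<dim_col R}))"

text \<open>permutation matrix of a permutation p: column j of A * perm_mat n p is column p j of A\<close>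
definition perm_mat :: "nat \<Rightarrow> (nat \<Rightarrow> nat) \<Rightarrow> complex mat" where
  "perm_mat n p = mat n n (\<lambda>(i,j). if i = p j then 1 else 0)"

definition swp :: "nat \<Rightarrow> nat \<Rightarrow> nat \<Rightarrow> nat" where
  "swp a b l = (if l = a then b else if l = b then a else l)"

definition swap_cols :: "complex mat \<Rightarrow> nat \<Rightarrow> nat \<Rightarrow> complex mat" where
  "swap_cols M a b = mat (dim_row M) (dim_col M) (\<lambda>(r,l). M $$ (r, swp a b l))"

definition householder :: "nat \<Rightarrow> nat \<Rightarrow> complex vec \<Rightarrow> complex mat \<Rightarrow> bool" where
  "householder q i x H \<longleftrightarrow> i < q \<and> (\<exists>(\<tau>::real) v. \<tau> \<ge> 0 \<and> v \<in> carrier_vec q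
     \<and> (\<forall>l<i. v $ l = 0) \<and> v $ i = 1
     \<and> H = 1\<^sub>m q - complex_of_real \<tau> \<cdot>\<^sub>m mat q q (\<lambda>(a,b). v $ a * cnj (v $ b))
     \<and> unitary_mat H
     \<and> (\<forall>l<i. (H *\<^sub>v x) $ l = x $ l)
     \<and> cmod ((H *\<^sub>v x) $ i) = sqrt (\<Sum>l\<in>{i..<q}. (cmod (x $ l))\<^sup>2)
     \<and> (\<forall>l\<in>{Suc i..<q}. (H *\<^sub>v x) $ l = 0))"

text \<open>gb_steps B i \<sigma> Hs R: after i steps of Golub--Businger on B, the accumulated column
  permutation is \<sigma> (column l of R comes from column \<sigma> l of B), Hs = [H_1,...,H_i],
  and R = H_i ... H_1 B P.\<close>
inductive gb_steps :: "complex mat \<Rightarrow> nat \<Rightarrow> (nat \<Rightarrow> nat) \<Rightarrow> complex mat list \<Rightarrow> complex mat \<Rightarrow> bool"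
  for B :: "complex mat" where
  gb_init: "gb_steps B 0 id [] B"
| gb_step: "gb_steps B i \<sigma> Hs R \<Longrightarrow> i < min (dim_row B) (dim_col B)
    \<Longrightarrow> jm \<in> {i..<dim_col B} \<Longrightarrow> (\<forall>j\<in>{i..<dim_col B}. colnorm2 R i j \<le> colnorm2 R i jm)
    \<Longrightarrow> householder (dim_row B) i (col (swap_cols R i jm) i) H
    \<Longrightarrow> gb_steps B (Suc i) (\<sigma> \<circ> swp i jm) (Hs @ [H]) (H * swap_cols R i jm)"

definition cc_gamma :: "complex mat \<Rightarrow> (nat \<Rightarrow> nat) \<Rightarrow> complex mat \<Rightarrow> nat \<Rightarrow> nat \<Rightarrow> nat \<Rightarrow> real" where
  "cc_gamma A p Q s t j = (if j < s + t
      then colnorm2 (mat_adj Q * A * perm_mat (dim_col A) p) s j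
      else colnorm2 A 0 (p j))"

definition cand_enum :: "nat set \<Rightarrow> nat \<Rightarrow> nat" where
  "cand_enum C l = sorted_list_of_set C ! l"

definition cand_mat :: "complex mat \<Rightarrow> (nat \<Rightarrow> nat) \<Rightarrow> complex mat \<Rightarrow> nat \<Rightarrow> nat set \<Rightarrow> complex mat" where
  "cand_mat A p Q s C = (let W = mat_adj Q * A * perm_mat (dim_col A) p in
     mat (dim_row A - s) (card C) (\<lambda>(i,l). W $$ (s + i, cand_enum C l)))"

type_synonym cc_state = "(nat \<Rightarrow> nat) \<times> complex mat \<times> nat \<times> nat \<times> real \<times> bool"
  (* permutation \<Pi> (as a function on positions), Q, s, t, \<mu>, "this is the first cycle" *)

definition cceqr_cycle :: "complex mat \<Rightarrow> nat \<Rightarrow> real \<Rightarrow> cc_state \<Rightarrow> cc_state \<Rightarrow> bool" where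
  "cceqr_cycle A k \<rho> st st' \<longleftrightarrow> (case st of (p, Q, s, t, \<mu>, fc) \<Rightarrow>
    (let m = dim_row A; n = dim_col A; T = {s..<s+t};
         b = nat (1 + \<lfloor>\<rho> * (real t - 1)\<rfloor>); g = cc_gamma A p Q s t
     in \<exists>C \<delta> t1 \<sigma> Hs R p1 c Q1 s1 t2.
        \<comment> \<open>Collect\<close>
        C \<subseteq> T \<and> card C = b \<and> (\<forall>x\<in>C. \<forall>j\<in>T - C. g j \<le> g x)
      \<and> \<delta> = (if T - C = {} then 0 else Max (g ` (T - C)))
      \<and> t1 = (if fc then b else t)
      \<and> gb_steps (cand_mat A p Q s C) (min (m - s) b) \<sigma> Hs R
      \<and> (\<forall>l<b. p1 (s + l) = p (cand_enum C (\<sigma> l)))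
      \<and> bij_betw p1 {s+b..<s+t} (p ` (T - C))
      \<and> (\<forall>l. l < s \<or> s + t \<le> l \<longrightarrow> p1 l = p l)
        \<comment> \<open>Commit\<close>
      \<and> {i\<in>{1..min (m - s) b}. max \<delta> \<mu> \<le> (cmod (R $$ (i-1, i-1)))\<^sup>2} \<noteq> {}
      \<and> c = Max {i\<in>{1..min (m - s) b}. max \<delta> \<mu> \<le> (cmod (R $$ (i-1, i-1)))\<^sup>2}
      \<and> Q1 = Q * four_block_mat (1\<^sub>m s) (0\<^sub>m s (m - s)) (0\<^sub>m (m - s) s)
                 (foldr (*) (take c Hs) (1\<^sub>m (m - s)))
      \<and> s1 = s + c \<and> t2 = t1 - c
      \<and> (if k \<le> s1 then st' = (p1, Q1, s1, t2, \<mu>, False)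
         else
        \<comment> \<open>Expand\<close>
         (let M = (if t2 = 0 then 0 else Max (cc_gamma A p1 Q1 s1 t2 ` {s1..<s1+t2}));
              Utr = {s1+t2..<n}; nrm = (\<lambda>j. colnorm2 A 0 (p1 j));
              U0 = {j\<in>Utr. M \<le> nrm j};
              U = (if U0 = {} \<and> Utr \<noteq> {} then {j\<in>Utr. 0.9 * Max (nrm ` Utr) \<le> nrm j} else U0)
          in \<exists>p'. (\<forall>l. l < s1 + t2 \<or> n \<le> l \<longrightarrow> p' l = p1 l)
               \<and> bij_betw p' {s1+t2..<s1+t2+card U} (p1 ` U)
               \<and> bij_betw p' {s1+t2+card U..<n} (p1 ` (Utr - U))
               \<and> st' = (p', Q1, s1, t2 + card U,
                        (if Utr - U = {} then 0 else Max (nrm ` (Utr - U))), False)))))"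

inductive cceqr_reach :: "complex mat \<Rightarrow> nat \<Rightarrow> real \<Rightarrow> cc_state \<Rightarrow> bool"
  for A :: "complex mat" and k :: nat and \<rho> :: real where
  cc_init: "cceqr_reach A k \<rho> (id, 1\<^sub>m (dim_row A), 0, dim_col A, 0, True)"
| cc_step: "cceqr_reach A k \<rho> (p, Q, s, t, \<mu>, fc) \<Longrightarrow> s < k
    \<Longrightarrow> cceqr_cycle A k \<rho> (p, Q, s, t, \<mu>, fc) st' \<Longrightarrow> cceqr_reach A k \<rho> st'"

text \<open>P is a permutation matrix that CCEQR (with some admissible tie-breaking) outputs on (A,k,\<rho>)\<close>
definition cceqr_output :: "complex mat \<Rightarrow> nat \<Rightarrow> real \<Rightarrow> complex mat \<Rightarrow> bool" where
  "cceqr_output A k \<rho> P \<longleftrightarrow> (\<exists>p Q s t \<mu> fc. cceqr_reach A k \<rho> (p, Q, s, t, \<mu>, fc)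
      \<and> k \<le> s \<and> P = perm_mat (dim_col A) p)"

end

theory Submission
  imports Defs "Jordan_Normal_Form.Determinant"
begin


lemma adj_dim[simp]: "dim_row (mat_adj M) = dim_col M" "dim_col (mat_adj M) = dim_row M"
  by (simp_all add: mat_adj_def)

lemma adj_index[simp]: "i < dim_col M \<Longrightarrow> j < dim_row M \<Longrightarrow> mat_adj M $$ (i,j) = cnj (M $$ (j,i))"
  unfolding mat_adj_def by (rule index_mat(1)[THEN trans]) auto

lemma adj_carrier[simp]: "M \<in> carrier_mat a b \<Longrightarrow> mat_adj M \<in> carrier_mat b a"
  using carrier_matD[of M a b] by (intro carrier_matI) simp_all

lemma adj_adj[simp]: "mat_adj (mat_adj M) = M"
  by (rule eq_matI) auto

lemma adj_one[simp]: "mat_adj (1\<^sub>m n) = 1\<^sub>m n"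
  by (rule eq_matI) auto

lemma adj_mult: assumes "A \<in> carrier_mat a b" "B \<in> carrier_mat b c"
  shows "mat_adj (A * B) = mat_adj B * mat_adj A"
proof (rule eq_matI)
  fix i j assume ij: "i < dim_row (mat_adj B * mat_adj A)" "j < dim_col (mat_adj B * mat_adj A)"
  hence i: "i < c" and j: "j < a" using assms by auto
  have "mat_adj (A * B) $$ (i, j) = cnj (\<Sum>k<b. A $$ (j,k) * B $$ (k,i))"
    using assms i j by (auto simp: scalar_prod_def atLeast0LessThan)
  also have "\<dots> = (\<Sum>k<b. cnj (B $$ (k,i)) * cnj (A $$ (j,k)))"
    by (simp add: mult.commute)
  also have "\<dots> = (mat_adj B * mat_adj A) $$ (i, j)"
    using assms i j by (auto simp: scalar_prod_def atLeast0LessThan)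
  finally show "mat_adj (A * B) $$ (i, j) = (mat_adj B * mat_adj A) $$ (i, j)" .
qed (use assms in auto)

definition vn :: "complex vec \<Rightarrow> nat \<Rightarrow> real" where
  "vn v r = (\<Sum>a\<in>{r..<dim_vec v}. (cmod (v $ a))\<^sup>2)"

lemma vn_nonneg: "0 \<le> vn v r" unfolding vn_def by (auto intro: sum_nonneg)

lemma colnorm2_vn: "colnorm2 M r j = vn (col M j) r" if "j < dim_col M"
  using that unfolding colnorm2_def vn_def by auto

lemma vn_split: assumes "r \<le> c" "c \<le> dim_vec v"
  shows "vn v r = (\<Sum>a\<in>{r..<c}. (cmod (v $ a))\<^sup>2) + vn v c"
  unfolding vn_def using assms by (metis (no_types, lifting) sum.atLeastLessThan_concat)

lemma vn_mono: assumes "r \<le> c" shows "vn v c \<le> vn v r"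
proof (cases "c \<le> dim_vec v")
  case True thus ?thesis using vn_split[OF assms True] by (auto intro: sum_nonneg)
next
  case False thus ?thesis unfolding vn_def using vn_nonneg[unfolded vn_def] by auto
qed

lemma vn_term: assumes "r < dim_vec v" shows "(cmod (v $ r))\<^sup>2 \<le> vn v r"
proof -
  have "vn v r = (\<Sum>a\<in>{r..<Suc r}. (cmod (v $ a))\<^sup>2) + vn v (Suc r)"
    using assms by (intro vn_split) auto
  thus ?thesis using vn_nonneg[of v "Suc r"] by simp
qed

lemma vn_zero_iff: assumes "vn v r = 0" "r \<le> a" "a < dim_vec v" shows "v $ a = 0"
proof -
  have "(cmod (v $ a))\<^sup>2 \<le> vn v r" using vn_term[of a v] vn_mono[of r a v] assms(2,3) by linarith
  hence "(cmod (v $ a))\<^sup>2 \<le> 0" using assms(1) by simp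
  thus ?thesis by simp
qed

lemma vn_zero: assumes "\<And>a. r \<le> a \<Longrightarrow> a < dim_vec v \<Longrightarrow> v $ a = 0" shows "vn v r = 0"
  unfolding vn_def using assms by auto

lemma isometry: assumes U: "U \<in> carrier_mat p q" and uu: "mat_adj U * U = 1\<^sub>m q"
  and x: "x \<in> carrier_vec q" shows "vn (U *\<^sub>v x) 0 = vn x 0"
proof -
  define X where "X = mat q 1 (\<lambda>(i,_). x $ i)"
  have X: "X \<in> carrier_mat q 1" unfolding X_def by auto
  have gen: "(mat_adj Y * Y) $$ (0,0) = complex_of_real (vn (col Y 0) 0)" if "Y \<in> carrier_mat r 1" for Y r
  proof -
    have "(mat_adj Y * Y) $$ (0,0) = (\<Sum>i<r. cnj (Y $$ (i,0)) * Y $$ (i,0))"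
      using that by (auto simp: scalar_prod_def atLeast0LessThan)
    also have "\<dots> = (\<Sum>i<r. complex_of_real ((cmod (Y $$ (i,0)))\<^sup>2))"
      by (intro sum.cong refl) (metis complex_norm_square mult.commute of_real_power)
    also have "\<dots> = complex_of_real (vn (col Y 0) 0)"
      using that by (auto simp: vn_def atLeast0LessThan)
    finally show ?thesis .
  qed
  have "mat_adj (U * X) * (U * X) = mat_adj X * mat_adj U * (U * X)"
    using U X by (simp add: adj_mult)
  also have "\<dots> = mat_adj X * (mat_adj U * (U * X))"
    by (rule assoc_mult_mat) (use U X in auto)
  also have "mat_adj U * (U * X) = (mat_adj U * U) * X"
    by (rule assoc_mult_mat[symmetric]) (use U X in auto)
  also have "mat_adj X * ((mat_adj U * U) * X) = mat_adj X * X" using uu X by simp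
  finally have e: "mat_adj (U * X) * (U * X) = mat_adj X * X" .
  have cx: "col X 0 = x" using x unfolding X_def by (auto simp: col_def)
  have c2: "col (U*X) 0 = U *\<^sub>v x" using col_mult2[OF U X, of 0] cx by simp
  have UX: "U * X \<in> carrier_mat p 1" using U X by auto
  have "complex_of_real (vn (U *\<^sub>v x) 0) = complex_of_real (vn x 0)"
    using gen[OF UX] gen[OF X] unfolding e c2 cx by simp
  thus ?thesis by simp
qed



definition pres :: "nat \<Rightarrow> nat \<Rightarrow> complex mat \<Rightarrow> bool" where
  "pres q c M \<longleftrightarrow> M \<in> carrier_mat q q \<and>
     (\<forall>x \<in> carrier_vec q. (\<forall>r<c. (M *\<^sub>v x) $ r = x $ r) \<and> vn (M *\<^sub>v x) c = vn x c)"

lemma pres_carrier: "pres q c M \<Longrightarrow> M \<in> carrier_mat q q" unfolding pres_def by auto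

lemma pres_one: "pres q c (1\<^sub>m q)" unfolding pres_def by auto

lemma pres_mult: assumes "pres q c A" "pres q c B" shows "pres q c (A * B)"
  unfolding pres_def
proof (intro conjI ballI allI impI)
  have A: "A \<in> carrier_mat q q" and B: "B \<in> carrier_mat q q" using assms pres_carrier by auto
  show "A * B \<in> carrier_mat q q" using A B by auto
  fix x :: "complex vec" assume x: "x \<in> carrier_vec q"
  have e: "(A * B) *\<^sub>v x = A *\<^sub>v (B *\<^sub>v x)" using A B x by simp
  have Bx: "B *\<^sub>v x \<in> carrier_vec q" using B x by auto
  { fix r assume "r < c"
    thus "((A * B) *\<^sub>v x) $ r = x $ r" unfolding e using assms x Bx unfolding pres_def by auto }
  show "vn ((A * B) *\<^sub>v x) c = vn x c" unfolding e using assms x Bx unfolding pres_def by auto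
qed

lemma pres_mono: assumes "c' \<le> c" "pres q c M" shows "pres q c' M"
  unfolding pres_def
proof (intro conjI ballI allI impI)
  have M: "M \<in> carrier_mat q q" using assms pres_carrier by auto
  thus "M \<in> carrier_mat q q" .
  fix x :: "complex vec" assume x: "x \<in> carrier_vec q"
  have h: "\<And>r. r < c \<Longrightarrow> (M *\<^sub>v x) $ r = x $ r" and t: "vn (M *\<^sub>v x) c = vn x c"
    using assms x unfolding pres_def by auto
  show "(M *\<^sub>v x) $ r = x $ r" if "r < c'" for r using h that assms by auto
  show "vn (M *\<^sub>v x) c' = vn x c'"
  proof (cases "c \<le> q")
    case True
    have d: "dim_vec (M *\<^sub>v x) = q" "dim_vec x = q" using M x by auto
    have "vn (M *\<^sub>v x) c' = (\<Sum>a\<in>{c'..<c}. (cmod ((M *\<^sub>v x) $ a))\<^sup>2) + vn (M *\<^sub>v x) c"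
      by (rule vn_split) (use assms True d in auto)
    also have "\<dots> = (\<Sum>a\<in>{c'..<c}. (cmod (x $ a))\<^sup>2) + vn x c"
      using h t by auto
    also have "\<dots> = vn x c'" by (rule vn_split[symmetric]) (use assms True d in auto)
    finally show ?thesis .
  next
    case False
    have "M *\<^sub>v x = x"
    proof (rule eq_vecI)
      fix i assume i: "i < dim_vec x"
      hence "i < c" using x False by auto
      from h[OF this] show "(M *\<^sub>v x) $ i = x $ i" .
    qed (use M x in auto)
    thus ?thesis by simp
  qed
qed

lemma pres_intro: assumes M: "M \<in> carrier_mat q q" and uu: "mat_adj M * M = 1\<^sub>m q" and c: "c \<le> q"
  and h: "\<And>x r. x \<in> carrier_vec q \<Longrightarrow> r < c \<Longrightarrow> (M *\<^sub>v x) $ r = x $ r"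
  shows "pres q c M"
  unfolding pres_def
proof (intro conjI ballI allI impI)
  show "M \<in> carrier_mat q q" by fact
  fix x :: "complex vec" assume x: "x \<in> carrier_vec q"
  show "(M *\<^sub>v x) $ r = x $ r" if "r < c" for r using h x that by auto
  have d: "dim_vec (M *\<^sub>v x) = q" "dim_vec x = q" using M x by auto
  have "vn (M *\<^sub>v x) 0 = vn x 0" by (rule isometry[OF M uu x])
  moreover have "vn (M *\<^sub>v x) 0 = (\<Sum>a\<in>{0..<c}. (cmod ((M *\<^sub>v x) $ a))\<^sup>2) + vn (M *\<^sub>v x) c"
    by (rule vn_split) (use c d in auto)
  moreover have "vn x 0 = (\<Sum>a\<in>{0..<c}. (cmod (x $ a))\<^sup>2) + vn x c"
    by (rule vn_split) (use c d in auto)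
  moreover have "(\<Sum>a\<in>{0..<c}. (cmod ((M *\<^sub>v x) $ a))\<^sup>2) = (\<Sum>a\<in>{0..<c}. (cmod (x $ a))\<^sup>2)"
    using h x by auto
  ultimately show "vn (M *\<^sub>v x) c = vn x c" by linarith
qed

lemma unitary_pres0: "M \<in> carrier_mat q q \<Longrightarrow> mat_adj M * M = 1\<^sub>m q \<Longrightarrow> pres q 0 M"
  by (rule pres_intro) auto

definition hh :: "nat \<Rightarrow> nat \<Rightarrow> complex mat \<Rightarrow> bool" where
  "hh q i H \<longleftrightarrow> i < q \<and> (\<exists>(\<tau>::real) v. v \<in> carrier_vec q
     \<and> (\<forall>l<i. v $ l = 0)
     \<and> H = 1\<^sub>m q - complex_of_real \<tau> \<cdot>\<^sub>m mat q q (\<lambda>(a,b). v $ a * cnj (v $ b))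
     \<and> unitary_mat H)"

lemma householder_hh: assumes "householder q i x H" shows "hh q i H"
proof -
  have iq: "i < q" using assms unfolding householder_def by (elim conjE)
  obtain \<tau> v where tv: "\<tau> \<ge> 0 \<and> v \<in> carrier_vec q
     \<and> (\<forall>l<i. v $ l = 0) \<and> v $ i = 1
     \<and> H = 1\<^sub>m q - complex_of_real \<tau> \<cdot>\<^sub>m mat q q (\<lambda>(a,b). v $ a * cnj (v $ b))
     \<and> unitary_mat H
     \<and> (\<forall>l<i. (H *\<^sub>v x) $ l = x $ l)
     \<and> cmod ((H *\<^sub>v x) $ i) = sqrt (\<Sum>l\<in>{i..<q}. (cmod (x $ l))\<^sup>2)
     \<and> (\<forall>l\<in>{Suc i..<q}. (H *\<^sub>v x) $ l = 0)"
    using assms unfolding householder_def by (elim conjE exE) (rule that, (intro conjI), assumption+)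
  show ?thesis unfolding hh_def
    by (rule conjI[OF iq], rule exI[of _ \<tau>], rule exI[of _ v]) (use tv in \<open>elim conjE, intro conjI\<close>)
qed

lemma hh_carrier: assumes "hh q i H" shows "H \<in> carrier_mat q q"
proof -
  obtain \<tau> v where 
    H: "H = 1\<^sub>m q - complex_of_real \<tau> \<cdot>\<^sub>m mat q q (\<lambda>(a,b). v $ a * cnj (v $ b))"
    using assms unfolding hh_def by (elim conjE exE) (rule that)
  show ?thesis unfolding H by (rule carrier_matI) simp_all
qed

lemma hh_unit: assumes "hh q i H" shows "mat_adj H * H = 1\<^sub>m q"
proof -
  have "unitary_mat H" using assms unfolding hh_def by (elim conjE exE)
  hence "mat_adj H * H = 1\<^sub>m (dim_row H)" unfolding unitary_mat_def by blast
  moreover have "dim_row H = q" using hh_carrier[OF assms] by auto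
  ultimately show ?thesis by simp
qed

lemma hh_herm: assumes "hh q i H" shows "mat_adj H = H"
proof -
  obtain \<tau> v where 
    H: "H = 1\<^sub>m q - complex_of_real \<tau> \<cdot>\<^sub>m mat q q (\<lambda>(a,b). v $ a * cnj (v $ b))"
    using assms unfolding hh_def by (elim conjE exE) (rule that)
  have e: "H $$ (a,b) = (if a = b then 1 else 0) - complex_of_real \<tau> * (v $ a * cnj (v $ b))"
    if "a < q" "b < q" for a b
    using that unfolding H by (simp only: index_minus_mat index_smult_mat index_one_mat index_mat dim_row_mat dim_col_mat) simp
  show ?thesis
  proof (rule eq_matI)
    fix a b assume "a < dim_row H" "b < dim_col H"
    hence ab: "a < q" "b < q" unfolding H by auto
    have dH: "dim_row H = q" "dim_col H = q" by (simp_all add: H)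
    have "mat_adj H $$ (a, b) = cnj (H $$ (b,a))" using ab dH by simp
    also have "\<dots> = cnj ((if b = a then 1 else 0) - complex_of_real \<tau> * (v $ b * cnj (v $ a)))"
      by (simp only: e[OF ab(2) ab(1)])
    also have "\<dots> = (if a = b then 1 else 0) - complex_of_real \<tau> * (v $ a * cnj (v $ b))"
      by (simp add: mult.commute)
    also have "\<dots> = H $$ (a,b)" by (simp only: e[OF ab])
    finally show "mat_adj H $$ (a, b) = H $$ (a, b)" .
  qed (auto simp: H)
qed

lemma hh_pres: assumes "hh q i H" shows "pres q i H"
proof -
  obtain \<tau> v where v: "v \<in> carrier_vec q" "\<forall>l<i. v $ l = 0"
    and H: "H = 1\<^sub>m q - complex_of_real \<tau> \<cdot>\<^sub>m mat q q (\<lambda>(a,b). v $ a * cnj (v $ b))"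
    and iq: "i < q"
    using assms unfolding hh_def by (elim conjE exE) (rule that, assumption+)
  show ?thesis
  proof (rule pres_intro[OF hh_carrier[OF assms] hh_unit[OF assms]])
    show "i \<le> q" using iq by simp
    fix x :: "complex vec" and r assume x: "x \<in> carrier_vec q" and r: "r < i"
    have "row H r = unit_vec q r"
    proof (rule eq_vecI)
      fix b assume "b < dim_vec (unit_vec q r)"
      hence b: "b < q" by simp
      have vr: "v $ r = 0" using v r by auto
      have "row H r $ b = H $$ (r,b)" using b r iq H by simp
      also have "\<dots> = (if r = b then 1 else 0) - complex_of_real \<tau> * (v $ r * cnj (v $ b))"
        using b r iq unfolding H
        by (simp only: index_minus_mat index_smult_mat index_one_mat index_mat dim_row_mat dim_col_mat) simp
      also have "\<dots> = unit_vec q r $ b" using vr b by (simp add: unit_vec_def)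
      finally show "row H r $ b = unit_vec q r $ b" .
    qed (use H in simp)
    moreover have "r < dim_row H" using hh_carrier[OF assms] r iq by auto
    ultimately show "(H *\<^sub>v x) $ r = x $ r" using x r iq by (simp add: scalar_prod_left_unit)
  qed
qed



definition prodH :: "nat \<Rightarrow> complex mat list \<Rightarrow> complex mat" where
  "prodH q Hs = foldl (\<lambda>acc H. H * acc) (1\<^sub>m q) Hs"

lemma prodH_snoc[simp]: "prodH q (Hs @ [H]) = H * prodH q Hs"
  unfolding prodH_def by simp

lemma prodH_Nil[simp]: "prodH q [] = 1\<^sub>m q" unfolding prodH_def by simp

lemma prodH_pres: "(\<And>H. H \<in> set Hs \<Longrightarrow> pres q c H) \<Longrightarrow> pres q c (prodH q Hs)"
proof (induction Hs rule: rev_induct)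
  case Nil thus ?case by (simp add: pres_one)
next
  case (snoc H Hs) thus ?case by (simp add: pres_mult)
qed

lemma prodH_carrier: "(\<And>H. H \<in> set Hs \<Longrightarrow> H \<in> carrier_mat q q) \<Longrightarrow> prodH q Hs \<in> carrier_mat q q"
proof (induction Hs rule: rev_induct)
  case Nil thus ?case by simp
next
  case (snoc H Hs) thus ?case by (auto intro!: mult_carrier_mat)
qed

lemma prodH_append: assumes "\<And>H. H \<in> set Hs \<Longrightarrow> H \<in> carrier_mat q q"
  "\<And>H. H \<in> set Gs \<Longrightarrow> H \<in> carrier_mat q q"
  shows "prodH q (Hs @ Gs) = prodH q Gs * prodH q Hs"
  using assms(2)
proof (induction Gs rule: rev_induct)
  case Nil
  have "prodH q Hs \<in> carrier_mat q q" using prodH_carrier assms(1) by blast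
  thus ?case by simp
next
  case (snoc G Gs)
  have G: "G \<in> carrier_mat q q" using snoc.prems by simp
  have Gs: "\<And>H. H \<in> set Gs \<Longrightarrow> H \<in> carrier_mat q q" using snoc.prems by simp
  have IH: "prodH q (Hs @ Gs) = prodH q Gs * prodH q Hs" using snoc.IH Gs by blast
  have PG: "prodH q Gs \<in> carrier_mat q q" using prodH_carrier Gs by blast
  have PHs: "prodH q Hs \<in> carrier_mat q q" using prodH_carrier assms(1) by blast
  have "prodH q (Hs @ Gs @ [G]) = G * prodH q (Hs @ Gs)"
    by (simp only: append_assoc[symmetric] prodH_snoc)
  also have "\<dots> = G * (prodH q Gs * prodH q Hs)" by (simp only: IH)
  also have "\<dots> = (G * prodH q Gs) * prodH q Hs"
    by (rule assoc_mult_mat[symmetric, OF G PG PHs])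
  also have "\<dots> = prodH q (Gs @ [G]) * prodH q Hs" by simp
  finally show ?case .
qed

lemma swp_simps: "j < i \<Longrightarrow> i \<le> jm \<Longrightarrow> swp i jm j = j"
  "swp i jm i = jm"
  unfolding swp_def by auto

lemma swp_lt: "l < w \<Longrightarrow> i < w \<Longrightarrow> jm < w \<Longrightarrow> swp i jm l < w" unfolding swp_def by auto
lemma swp_ge: "j \<le> l \<Longrightarrow> j \<le> i \<Longrightarrow> i \<le> jm \<Longrightarrow> j \<le> swp i jm l" unfolding swp_def by auto

lemma swap_cols_carrier[simp]: "dim_row (swap_cols R i jm) = dim_row R" "dim_col (swap_cols R i jm) = dim_col R"
  unfolding swap_cols_def by auto

lemma col_swap: assumes "l < dim_col R" "i < dim_col R" "jm < dim_col R"
  shows "col (swap_cols R i jm) l = col R (swp i jm l)"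
  by (rule eq_vecI) (use assms swp_lt in \<open>auto simp: swap_cols_def\<close>)

lemma gb_inv: assumes "gb_steps B i \<sigma> Hs R"
  shows "R \<in> carrier_mat (dim_row B) (dim_col B) \<and> i \<le> min (dim_row B) (dim_col B)
    \<and> length Hs = i \<and> (\<forall>j<i. hh (dim_row B) j (Hs!j)) \<and> (\<forall>l<dim_col B. \<sigma> l < dim_col B)
    \<and> (\<forall>l<dim_col B. col R l = prodH (dim_row B) Hs *\<^sub>v col B (\<sigma> l))
    \<and> (\<forall>j<i. \<forall>r. j < r \<and> r < dim_row B \<longrightarrow> R $$ (r,j) = 0)
    \<and> (\<forall>j<i. \<forall>l. j \<le> l \<and> l < dim_col B \<longrightarrow> vn (col R l) j \<le> (cmod (R $$ (j,j)))\<^sup>2)"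
  using assms
proof (induction rule: gb_steps.induct)
  case gb_init
  show ?case
  proof (intro conjI allI impI)
    show "B \<in> carrier_mat (dim_row B) (dim_col B)" by (rule carrier_matI) simp_all
    show "0 \<le> min (dim_row B) (dim_col B)" by simp
    show "length [] = (0::nat)" by simp
    show "hh (dim_row B) j ([] ! j)" if "j < 0" for j using that by simp
    show "id l < dim_col B" if "l < dim_col B" for l using that by simp
    show "col B l = prodH (dim_row B) [] *\<^sub>v col B (id l)" if "l < dim_col B" for l using that by simp
    show "B $$ (r, j) = 0" if "j < 0" "j < r \<and> r < dim_row B" for j r using that by simp
    show "vn (col B l) j \<le> (cmod (B $$ (j, j)))\<^sup>2" if "j < 0" "j \<le> l \<and> l < dim_col B" for j l using that by simp
  qed
next
  case (gb_step i \<sigma> Hs R jm H)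
  define q where "q = dim_row B"
  define w where "w = dim_col B"
  define S where "S = swap_cols R i jm"
  have R: "R \<in> carrier_mat q w" and len: "length Hs = i" and hhs: "\<forall>j<i. hh q j (Hs!j)"
    and sig: "\<forall>l<w. \<sigma> l < w" and colR: "\<forall>l<w. col R l = prodH q Hs *\<^sub>v col B (\<sigma> l)"
    and zer: "\<forall>j<i. \<forall>r. j < r \<and> r < q \<longrightarrow> R $$ (r,j) = 0"
    and gb: "\<forall>j<i. \<forall>l. j \<le> l \<and> l < w \<longrightarrow> vn (col R l) j \<le> (cmod (R $$ (j,j)))\<^sup>2"
    using gb_step.IH unfolding q_def w_def by auto
  have iq: "i < q" "i < w" and jm: "i \<le> jm" "jm < w" using gb_step.hyps unfolding q_def w_def by auto
  have piv: "\<And>j. i \<le> j \<Longrightarrow> j < w \<Longrightarrow> colnorm2 R i j \<le> colnorm2 R i jm"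
    using gb_step.hyps unfolding w_def by auto
  have hhH: "householder q i (col S i) H" using gb_step.hyps unfolding q_def S_def by auto
  have H: "H \<in> carrier_mat q q" using hh_carrier[OF householder_hh[OF hhH]] .
  have pH: "pres q i H" using hh_pres[OF householder_hh[OF hhH]] .
  have S: "S \<in> carrier_mat q w" using R unfolding S_def by (intro carrier_matI) auto
  have colS: "\<And>l. l < w \<Longrightarrow> col S l = col R (swp i jm l)"
    unfolding S_def using R iq jm by (intro col_swap) auto
  have colR': "\<And>l. l < w \<Longrightarrow> col (H * S) l = H *\<^sub>v col S l" using H S by auto
  have R'c: "H * S \<in> carrier_mat q w" using H S by auto
  have ent: "\<And>r l. r < q \<Longrightarrow> l < w \<Longrightarrow> (H * S) $$ (r,l) = (H *\<^sub>v col S l) $ r"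
    using H S by simp
  have Hs_all: "\<And>G. G \<in> set Hs \<Longrightarrow> G \<in> carrier_mat q q"
    using hhs len hh_carrier by (metis in_set_conv_nth)
  have PH: "prodH q Hs \<in> carrier_mat q q" using prodH_carrier Hs_all by blast
  have cS_car: "\<And>l. l < w \<Longrightarrow> col S l \<in> carrier_vec q" using S by auto
  have keepH: "\<And>x r. x \<in> carrier_vec q \<Longrightarrow> r < i \<Longrightarrow> (H *\<^sub>v x) $ r = x $ r"
    and vnH: "\<And>x. x \<in> carrier_vec q \<Longrightarrow> vn (H *\<^sub>v x) i = vn x i"
    using pH unfolding pres_def by auto
  have vnHj: "\<And>x j. x \<in> carrier_vec q \<Longrightarrow> j \<le> i \<Longrightarrow> vn (H *\<^sub>v x) j = vn x j"
    using pres_mono[OF _ pH] unfolding pres_def by blast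
  have diagS: "(cmod ((H *\<^sub>v col S i) $ i))\<^sup>2 = vn (col S i) i"
  proof -
    have "cmod ((H *\<^sub>v col S i) $ i) = sqrt (vn (col S i) i)"
      using hhH S unfolding householder_def vn_def by auto
    thus ?thesis using vn_nonneg by simp
  qed
  show ?case unfolding q_def[symmetric] w_def[symmetric] S_def[symmetric]
  proof (intro conjI allI impI)
    show "H * S \<in> carrier_mat q w" by fact
    show "Suc i \<le> min q w" using iq by simp
    show "length (Hs @ [H]) = Suc i" using len by simp
    show "hh q j ((Hs @ [H]) ! j)" if "j < Suc i" for j
    proof (cases "j < i")
      case True thus ?thesis using hhs len by (simp add: nth_append)
    next
      case False hence "j = i" using that by simp
      moreover have "(Hs @ [H]) ! i = H" using len by (metis nth_append_length)
      ultimately show ?thesis using householder_hh[OF hhH] by simp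
    qed
    show "(\<sigma> \<circ> swp i jm) l < w" if "l < w" for l using that sig swp_lt iq jm by auto
    show "col (H * S) l = prodH q (Hs @ [H]) *\<^sub>v col B ((\<sigma> \<circ> swp i jm) l)" if l: "l < w" for l
    proof -
      have sl: "swp i jm l < w" using swp_lt l iq jm by auto
      have "col (H * S) l = H *\<^sub>v (prodH q Hs *\<^sub>v col B (\<sigma> (swp i jm l)))"
        using colR' colS colR l sl by simp
      also have "\<dots> = (H * prodH q Hs) *\<^sub>v col B (\<sigma> (swp i jm l))"
        using H PH sig sl unfolding w_def q_def by (subst assoc_mult_mat_vec) auto
      finally show ?thesis by simp
    qed
    show "(H * S) $$ (r, j) = 0" if "j < Suc i" "j < r \<and> r < q" for j r
    proof (cases "j < i")
      case True
      have jw: "j < w" using True iq by simp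
      have cSj: "col S j = col R j" using colS[OF jw] swp_simps(1)[OF True jm(1)] by simp
      have z: "col R j $ a = 0" if "j < a" "a < q" for a using zer True that R jw by auto
      have "vn (col R j) i = 0" by (rule vn_zero) (use z True R in auto)
      hence "vn (H *\<^sub>v col S j) i = 0" using vnH cS_car[OF jw] cSj by simp
      show ?thesis
      proof (cases "r < i")
        case True
        thus ?thesis using ent[of r j] jw that keepH[OF cS_car[OF jw] True] cSj z by simp
      next
        case False
        thus ?thesis using ent[of r j] jw that vn_zero_iff[OF \<open>vn (H *\<^sub>v col S j) i = 0\<close>, of r] H by simp
      qed
    next
      case False
      hence "j = i" using that by simp
      thus ?thesis using ent[of r j] that hhH iq unfolding householder_def by auto
    qed
    show "vn (col (H * S) l) j \<le> (cmod ((H * S) $$ (j, j)))\<^sup>2" if "j < Suc i" "j \<le> l \<and> l < w" for j l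
    proof -
      have sl: "swp i jm l < w" using swp_lt that iq jm by auto
      have jw: "j < w" using that by simp
      have "vn (col (H * S) l) j = vn (col S l) j"
        using colR' that vnHj cS_car that by auto
      also have "\<dots> = vn (col R (swp i jm l)) j" using colS that by simp
      finally have e1: "vn (col (H * S) l) j = vn (col R (swp i jm l)) j" .
      show ?thesis
      proof (cases "j < i")
        case True
        have cSj: "col S j = col R j" using colS[OF jw] swp_simps(1)[OF True jm(1)] by simp
        have "(H * S) $$ (j, j) = R $$ (j,j)"
          using ent[of j j] jw iq True keepH[OF cS_car[OF jw] True] cSj R by simp
        moreover have "j \<le> swp i jm l" using swp_ge that True jm by auto
        ultimately show ?thesis using e1 gb True sl by auto
      next
        case False
        hence ji: "j = i" using that by simp
        have "vn (col R (swp i jm l)) i = colnorm2 R i (swp i jm l)" using colnorm2_vn R sl by auto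
        also have "\<dots> \<le> colnorm2 R i jm" using piv sl swp_ge[of i l i jm] that ji jm by auto
        also have "\<dots> = vn (col S i) i" using colnorm2_vn R jm colS[OF iq(2)] swp_simps(2) by auto
        also have "\<dots> = (cmod ((H * S) $$ (i, i)))\<^sup>2" using diagS ent[of i i] iq by simp
        finally show ?thesis using e1 ji by simp
      qed
    qed
  qed
qed



lemma adj_four_block: assumes G: "G \<in> carrier_mat q q"
  shows "mat_adj (four_block_mat (1\<^sub>m s) (0\<^sub>m s q) (0\<^sub>m q s) G)
       = four_block_mat (1\<^sub>m s) (0\<^sub>m s q) (0\<^sub>m q s) (mat_adj G)"
proof (rule eq_matI)
  fix i j assume "i < dim_row (four_block_mat (1\<^sub>m s) (0\<^sub>m s q) (0\<^sub>m q s) (mat_adj G))"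
    "j < dim_col (four_block_mat (1\<^sub>m s) (0\<^sub>m s q) (0\<^sub>m q s) (mat_adj G))"
  hence ij: "i < s + q" "j < s + q" using G by auto
  show "mat_adj (four_block_mat (1\<^sub>m s) (0\<^sub>m s q) (0\<^sub>m q s) G) $$ (i, j) =
        four_block_mat (1\<^sub>m s) (0\<^sub>m s q) (0\<^sub>m q s) (mat_adj G) $$ (i, j)"
    using ij G by (cases "i < s"; cases "j < s") auto
qed (use G in auto)

lemma D_carrier: "G \<in> carrier_mat q q \<Longrightarrow> four_block_mat (1\<^sub>m s) (0\<^sub>m s q) (0\<^sub>m q s) G \<in> carrier_mat (s+q) (s+q)"
  by (rule four_block_carrier_mat) auto

lemma D_mult: assumes G: "G \<in> carrier_mat q q" and v: "v \<in> carrier_vec (s + q)"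
  shows "mat_adj (four_block_mat (1\<^sub>m s) (0\<^sub>m s q) (0\<^sub>m q s) G) *\<^sub>v v
     = vec_first v s @\<^sub>v (mat_adj G *\<^sub>v vec_last v q)"
proof -
  have aG: "mat_adj G \<in> carrier_mat q q" using G by simp
  have "mat_adj (four_block_mat (1\<^sub>m s) (0\<^sub>m s q) (0\<^sub>m q s) G) *\<^sub>v v
     = four_block_mat (1\<^sub>m s) (0\<^sub>m s q) (0\<^sub>m q s) (mat_adj G) *\<^sub>v (vec_first v s @\<^sub>v vec_last v q)"
    using adj_four_block[OF G] v by simp
  also have "\<dots> = (1\<^sub>m s *\<^sub>v vec_first v s + 0\<^sub>m s q *\<^sub>v vec_last v q) @\<^sub>v
                   (0\<^sub>m q s *\<^sub>v vec_first v s + mat_adj G *\<^sub>v vec_last v q)"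
    by (rule four_block_mat_mult_vec) (use aG in auto)
  also have "0\<^sub>m s q *\<^sub>v vec_last v q = 0\<^sub>v s"
    by (rule eq_vecI) (auto simp: scalar_prod_def)
  also have "0\<^sub>m q s *\<^sub>v vec_first v s = 0\<^sub>v q"
    by (rule eq_vecI) (auto simp: scalar_prod_def)
  also have "(1\<^sub>m s *\<^sub>v vec_first v s + 0\<^sub>v s) @\<^sub>v (0\<^sub>v q + mat_adj G *\<^sub>v vec_last v q)
     = vec_first v s @\<^sub>v (mat_adj G *\<^sub>v vec_last v q)"
    using aG by simp
  finally show ?thesis .
qed

lemma D_unit: assumes G: "G \<in> carrier_mat q q" and u: "mat_adj G * G = 1\<^sub>m q"
  shows "mat_adj (four_block_mat (1\<^sub>m s) (0\<^sub>m s q) (0\<^sub>m q s) G) * four_block_mat (1\<^sub>m s) (0\<^sub>m s q) (0\<^sub>m q s) G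
     = 1\<^sub>m (s + q)"
proof -
  have aG: "mat_adj G \<in> carrier_mat q q" using G by simp
  have "four_block_mat (1\<^sub>m s) (0\<^sub>m s q) (0\<^sub>m q s) (mat_adj G) * four_block_mat (1\<^sub>m s) (0\<^sub>m s q) (0\<^sub>m q s) G
    = four_block_mat (1\<^sub>m s * 1\<^sub>m s + 0\<^sub>m s q * 0\<^sub>m q s) (1\<^sub>m s * 0\<^sub>m s q + 0\<^sub>m s q * G)
        (0\<^sub>m q s * 1\<^sub>m s + mat_adj G * 0\<^sub>m q s) (0\<^sub>m q s * 0\<^sub>m s q + mat_adj G * G)"
    by (rule mult_four_block_mat) (use G aG in auto)
  also have "\<dots> = four_block_mat (1\<^sub>m s) (0\<^sub>m s q) (0\<^sub>m q s) (1\<^sub>m q)"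
    using G aG u by simp
  finally show ?thesis using adj_four_block[OF G] by simp
qed

lemma vec_first_append_idx: "r < s \<Longrightarrow> a \<in> carrier_vec s \<Longrightarrow> (a @\<^sub>v b) $ r = a $ r"
  by simp

lemma vec_last_append2: assumes "a \<in> carrier_vec s" "b \<in> carrier_vec q"
  shows "vec_last (a @\<^sub>v b) q = b"
  by (rule eq_vecI) (use assms in \<open>auto simp: vec_last_def\<close>)

lemma vec_last_idx: "i < q \<Longrightarrow> v \<in> carrier_vec (s + q) \<Longrightarrow> vec_last v q $ i = v $ (s + i)"
  by (auto simp: vec_last_def)

lemma vn_last: assumes v: "v \<in> carrier_vec (s + q)"
  shows "vn v (s + i) = vn (vec_last v q) i"
proof -
  have "vn v (s + i) = (\<Sum>a\<in>{s+i..<s+q}. (cmod (v $ a))\<^sup>2)" using v by (simp add: vn_def)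
  also have "\<dots> = (\<Sum>a\<in>{i..<q}. (cmod (v $ (s + a)))\<^sup>2)"
    by (rule sum.reindex_bij_witness[of _ "\<lambda>a. a + s" "\<lambda>a. a - s"]) auto
  also have "\<dots> = vn (vec_last v q) i" using v by (simp add: vn_def vec_last_def)
  finally show ?thesis .
qed

lemma foldr_carrier: "(\<And>H. H \<in> set L \<Longrightarrow> H \<in> carrier_mat q q) \<Longrightarrow> foldr (*) L (1\<^sub>m q) \<in> carrier_mat q q"
  by (induction L) (auto intro!: mult_carrier_mat)

lemma foldr_adj: assumes "\<And>H. H \<in> set L \<Longrightarrow> H \<in> carrier_mat q q \<and> mat_adj H = H"
  shows "mat_adj (foldr (*) L (1\<^sub>m q)) = prodH q L"
  using assms
proof (induction L)
  case Nil thus ?case by simp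
next
  case (Cons H L)
  have H: "H \<in> carrier_mat q q" "mat_adj H = H" using Cons.prems by auto
  have Lc: "\<And>G. G \<in> set L \<Longrightarrow> G \<in> carrier_mat q q" using Cons.prems by auto
  have F: "foldr (*) L (1\<^sub>m q) \<in> carrier_mat q q" using foldr_carrier Lc by blast
  have "mat_adj (foldr (*) (H # L) (1\<^sub>m q)) = mat_adj (foldr (*) L (1\<^sub>m q)) * mat_adj H"
    using adj_mult[OF H(1) F] by simp
  also have "\<dots> = prodH q L * H" using Cons H by simp
  also have "\<dots> = prodH q L * prodH q [H]" using H(1) by (simp add: prodH_def)
  also have "\<dots> = prodH q ([H] @ L)" by (rule prodH_append[symmetric]) (use H Lc in auto)
  finally show ?case by simp
qed

lemma foldr_unit: assumes "\<And>H. H \<in> set L \<Longrightarrow> H \<in> carrier_mat q q \<and> mat_adj H * H = 1\<^sub>m q"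
  shows "mat_adj (foldr (*) L (1\<^sub>m q)) * foldr (*) L (1\<^sub>m q) = 1\<^sub>m q"
  using assms
proof (induction L)
  case Nil thus ?case by simp
next
  case (Cons H L)
  have H: "H \<in> carrier_mat q q" "mat_adj H * H = 1\<^sub>m q" using Cons.prems by auto
  have Lc: "\<And>G. G \<in> set L \<Longrightarrow> G \<in> carrier_mat q q" using Cons.prems by auto
  define F where "F = foldr (*) L (1\<^sub>m q)"
  have F: "F \<in> carrier_mat q q" using foldr_carrier Lc unfolding F_def by blast
  have IH: "mat_adj F * F = 1\<^sub>m q" using Cons unfolding F_def by simp
  have aF: "mat_adj F \<in> carrier_mat q q" "mat_adj H \<in> carrier_mat q q" using F H by auto
  have "mat_adj (H * F) * (H * F) = (mat_adj F * mat_adj H) * (H * F)"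
    using adj_mult[OF H(1) F] by simp
  also have "\<dots> = mat_adj F * (mat_adj H * (H * F))"
    by (rule assoc_mult_mat) (use aF H F in auto)
  also have "mat_adj H * (H * F) = (mat_adj H * H) * F"
    by (rule assoc_mult_mat[symmetric]) (use aF H F in auto)
  also have "\<dots> = F" using H F by simp
  finally show ?case using IH unfolding F_def by simp
qed

lemma perm_col: assumes A: "A \<in> carrier_mat m n" and j: "j < n" and pj: "p j < n"
  and Q: "Q \<in> carrier_mat m m"
  shows "col (mat_adj Q * A * perm_mat n p) j = mat_adj Q *\<^sub>v col A (p j)"
proof -
  have P: "perm_mat n p \<in> carrier_mat n n" unfolding perm_mat_def by auto
  have X: "mat_adj Q * A \<in> carrier_mat m n" using Q A by auto
  have cP: "col (perm_mat n p) j = unit_vec n (p j)"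
    by (rule eq_vecI) (use j pj in \<open>auto simp: perm_mat_def\<close>)
  have "col (mat_adj Q * A * perm_mat n p) j = (mat_adj Q * A) *\<^sub>v unit_vec n (p j)"
    using col_mult2[OF X P j] cP by simp
  also have "\<dots> = col (mat_adj Q * A) (p j)"
    by (rule eq_vecI) (use X pj in \<open>auto simp: scalar_prod_right_unit\<close>)
  also have "\<dots> = mat_adj Q *\<^sub>v col A (p j)"
    using col_mult2[OF adj_carrier[OF Q] A pj] by simp
  finally show ?thesis .
qed



definition xc :: "complex mat \<Rightarrow> complex mat \<Rightarrow> (nat \<Rightarrow> nat) \<Rightarrow> nat \<Rightarrow> complex vec" where
  "xc A Q p l = mat_adj Q *\<^sub>v col A (p l)"

lemma xc_carrier: "Q \<in> carrier_mat m m \<Longrightarrow> xc A Q p l \<in> carrier_vec m"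
  unfolding xc_def by (rule carrier_vecI) simp

lemma commit_ok:
  assumes A: "A \<in> carrier_mat m n"
  and Q: "Q \<in> carrier_mat m m" and Qu: "mat_adj Q * Q = 1\<^sub>m m" and sm: "s \<le> m" and stn: "s + t \<le> n"
  and pn: "\<forall>l<n. p l < n"
  and z: "\<forall>j<s. \<forall>r. j < r \<and> r < m \<longrightarrow> xc A Q p j $ r = 0"
  and g3: "\<forall>j<s. \<forall>l. j \<le> l \<and> l < n \<longrightarrow> vn (xc A Q p l) j \<le> (cmod (xc A Q p j $ j))\<^sup>2"
  and mu: "\<forall>l. s + t \<le> l \<and> l < n \<longrightarrow> colnorm2 A 0 (p l) \<le> \<mu>"
  and C: "C \<subseteq> {s..<s+t}" "card C = b"
  and dl: "\<forall>j \<in> {s..<s+t} - C. vn (xc A Q p j) s \<le> \<delta>"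
  and gb: "gb_steps (cand_mat A p Q s C) (min (m - s) b) \<sigma> Hs R"
  and p1a: "\<forall>l<b. p1 (s + l) = p (cand_enum C (\<sigma> l))"
  and p1b: "bij_betw p1 {s+b..<s+t} (p ` ({s..<s+t} - C))"
  and p1c: "\<forall>l. l < s \<or> s + t \<le> l \<longrightarrow> p1 l = p l"
  and c1: "1 \<le> c" and c2: "c \<le> min (m - s) b" and c3: "max \<delta> \<mu> \<le> (cmod (R $$ (c-1, c-1)))\<^sup>2"
  and Q1: "Q1 = Q * four_block_mat (1\<^sub>m s) (0\<^sub>m s (m - s)) (0\<^sub>m (m - s) s) (foldr (*) (take c Hs) (1\<^sub>m (m - s)))"
  shows "Q1 \<in> carrier_mat m m \<and> mat_adj Q1 * Q1 = 1\<^sub>m m \<and> s + c \<le> m \<and> (\<forall>l<n. p1 l < n) \<and>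
     (\<forall>j<s+c. \<forall>r. j < r \<and> r < m \<longrightarrow> xc A Q1 p1 j $ r = 0) \<and>
     (\<forall>j<s+c. \<forall>l. j \<le> l \<and> l < n \<longrightarrow> vn (xc A Q1 p1 l) j \<le> (cmod (xc A Q1 p1 j $ j))\<^sup>2)"
proof -
  define q where "q = m - s"
  define d where "d = min q b"
  define B where "B = cand_mat A p Q s C"
  define L where "L = take c Hs"
  define Gm where "Gm = foldr (*) L (1\<^sub>m q)"
  define Pc where "Pc = prodH q L"
  define Suf where "Suf = prodH q (drop c Hs)"
  define D where "D = four_block_mat (1\<^sub>m s) (0\<^sub>m s q) (0\<^sub>m q s) Gm"
  define T where "T = {s..<s+t}"
  have mq: "m = s + q" using sm unfolding q_def by simp
  have Q1D: "Q1 = Q * D" unfolding Q1 D_def Gm_def L_def q_def by simp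
  have finC: "finite C" using C(1) finite_subset by blast
  have bt: "b \<le> t" using C card_mono[of "{s..<s+t}" C] by auto
  have Bc: "B \<in> carrier_mat q b" unfolding B_def cand_mat_def Let_def q_def using A C(2)
    by (intro carrier_matI) auto
  note gi = gb_inv[OF gb[folded B_def]]
  have dimB: "dim_row B = q" "dim_col B = b" using Bc by auto
  have R: "R \<in> carrier_mat q b" and lenHs: "length Hs = d" and hhs: "\<forall>j<d. hh q j (Hs!j)"
    and sig: "\<forall>l<b. \<sigma> l < b" and colR: "\<forall>l<b. col R l = prodH q Hs *\<^sub>v col B (\<sigma> l)"
    and Rz: "\<forall>j<d. \<forall>r. j < r \<and> r < q \<longrightarrow> R $$ (r,j) = 0"
    and Rg: "\<forall>j<d. \<forall>l. j \<le> l \<and> l < b \<longrightarrow> vn (col R l) j \<le> (cmod (R $$ (j,j)))\<^sup>2"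
    using gi unfolding dimB d_def q_def by auto
  have cd: "c \<le> d" using c2 unfolding d_def q_def by simp
  have cb: "c \<le> b" "c \<le> q" using cd unfolding d_def by auto
  have hsL: "\<And>H. H \<in> set L \<Longrightarrow> \<exists>j<c. hh q j H"
  proof -
    fix H assume "H \<in> set L"
    then obtain j where j: "j < length L" "H = L ! j" by (metis in_set_conv_nth)
    hence "j < c" "j < d" "H = Hs ! j" using lenHs cd unfolding L_def by auto
    thus "\<exists>j<c. hh q j H" using hhs by auto
  qed
  have hsD: "\<And>H. H \<in> set (drop c Hs) \<Longrightarrow> pres q c H"
  proof -
    fix H assume "H \<in> set (drop c Hs)"
    then obtain j where j: "j < length (drop c Hs)" "H = drop c Hs ! j" by (metis in_set_conv_nth)
    hence "c + j < d" "H = Hs ! (c + j)" using lenHs cd by auto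
    hence "hh q (c+j) H" using hhs by auto
    thus "pres q c H" using hh_pres pres_mono[of c "c+j"] by auto
  qed
  have Lc: "\<And>H. H \<in> set L \<Longrightarrow> H \<in> carrier_mat q q \<and> mat_adj H = H"
    using hsL hh_carrier hh_herm by blast
  have Lu: "\<And>H. H \<in> set L \<Longrightarrow> H \<in> carrier_mat q q \<and> mat_adj H * H = 1\<^sub>m q"
    using hsL hh_carrier hh_unit by blast
  have Gm: "Gm \<in> carrier_mat q q" unfolding Gm_def using foldr_carrier Lc by blast
  have GmA: "mat_adj Gm = Pc" unfolding Gm_def Pc_def by (rule foldr_adj) (use Lc in blast)
  have GmU: "mat_adj Gm * Gm = 1\<^sub>m q" unfolding Gm_def by (rule foldr_unit) (use Lu in blast)
  have Pc0: "pres q 0 Pc" unfolding Pc_def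
    by (rule prodH_pres) (use hsL hh_pres pres_mono[of 0] in blast)
  have Sufp: "pres q c Suf" unfolding Suf_def by (rule prodH_pres) (use hsD in blast)
  have Pcc: "Pc \<in> carrier_mat q q" using Pc0 pres_carrier by blast
  have Sufc: "Suf \<in> carrier_mat q q" using Sufp pres_carrier by blast
  have HsSplit: "prodH q Hs = Suf * Pc"
  proof -
    have "prodH q Hs = prodH q (L @ drop c Hs)" unfolding L_def by simp
    also have "\<dots> = Suf * Pc" unfolding Suf_def Pc_def
      by (rule prodH_append) (use Lc hsD pres_carrier in blast)+
    finally show ?thesis .
  qed
  have Dc: "D \<in> carrier_mat m m" unfolding D_def mq by (rule D_carrier[OF Gm])
  have DU: "mat_adj D * D = 1\<^sub>m m" unfolding D_def mq by (rule D_unit[OF Gm GmU])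
  have aQ: "mat_adj Q \<in> carrier_mat m m" using Q by simp
  have aD: "mat_adj D \<in> carrier_mat m m" using Dc by simp
  have Q1c: "Q1 \<in> carrier_mat m m" unfolding Q1D using Q Dc by auto
  have Q1u: "mat_adj Q1 * Q1 = 1\<^sub>m m"
  proof -
    have "mat_adj Q1 * Q1 = (mat_adj D * mat_adj Q) * (Q * D)" unfolding Q1D using adj_mult[OF Q Dc] by simp
    also have "\<dots> = mat_adj D * (mat_adj Q * (Q * D))" by (rule assoc_mult_mat) (use aD aQ Q Dc in auto)
    also have "mat_adj Q * (Q * D) = (mat_adj Q * Q) * D" by (rule assoc_mult_mat[symmetric]) (use aQ Q Dc in auto)
    also have "\<dots> = D" using Qu Dc by simp
    finally show ?thesis using DU by simp
  qed
  define N where "N v = vec_first v s @\<^sub>v (Pc *\<^sub>v vec_last v q)" for v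
  have xQ1: "xc A Q1 p1 l = N (xc A Q p1 l)" for l
  proof -
    have "xc A Q1 p1 l = (mat_adj D * mat_adj Q) *\<^sub>v col A (p1 l)"
      unfolding xc_def Q1D using adj_mult[OF Q Dc] by simp
    also have "\<dots> = mat_adj D *\<^sub>v (mat_adj Q *\<^sub>v col A (p1 l))"
      by (rule assoc_mult_mat_vec) (use aD aQ A in auto)
    also have "\<dots> = N (xc A Q p1 l)" unfolding N_def xc_def D_def GmA[symmetric]
      by (rule D_mult[OF Gm], rule carrier_vecI) (use carrier_matD(2)[OF Q] mq in simp)
    finally show ?thesis .
  qed
  have vq: "v \<in> carrier_vec m \<Longrightarrow> v \<in> carrier_vec (s + q)" for v using mq by simp
  have N1: "N v \<in> carrier_vec m" for v unfolding N_def mq using Pcc by auto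
  have N2: "N v $ r = v $ r" if "r < s" for v r unfolding N_def using that Pcc by (simp add: vec_first_def)
  have N3: "vec_last (N v) q = Pc *\<^sub>v vec_last v q" for v
    unfolding N_def by (rule vec_last_append2[of _ s]) (use Pcc in auto)
  have N4: "vn (N v) (s + i) = vn (Pc *\<^sub>v vec_last v q) i" for v i
    using vn_last[of "N v" s q i] N1 mq N3 by simp
  have P0: "vn (Pc *\<^sub>v w) 0 = vn w 0" if "w \<in> carrier_vec q" for w using Pc0 that unfolding pres_def by auto
  have N5: "vn (N v) j = vn v j" if v: "v \<in> carrier_vec m" and j: "j \<le> s" for v j
  proof -
    have "vn (N v) s = vn v s"
      using N4[of v 0] P0[of "vec_last v q"] vn_last[of v s q 0] v mq by simp
    moreover have "vn (N v) j = (\<Sum>a\<in>{j..<s}. (cmod (N v $ a))\<^sup>2) + vn (N v) s"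
      by (rule vn_split) (use j sm N1[of v] in auto)
    moreover have "vn v j = (\<Sum>a\<in>{j..<s}. (cmod (v $ a))\<^sup>2) + vn v s"
      by (rule vn_split) (use j sm v in auto)
    moreover have "(\<Sum>a\<in>{j..<s}. (cmod (N v $ a))\<^sup>2) = (\<Sum>a\<in>{j..<s}. (cmod (v $ a))\<^sup>2)"
      using N2 by auto
    ultimately show ?thesis by linarith
  qed
  have N6: "N v = v" if v: "v \<in> carrier_vec m" and vz: "\<And>r. s \<le> r \<Longrightarrow> r < m \<Longrightarrow> v $ r = 0" for v
  proof -
    have "vn v s = 0" by (rule vn_zero) (use v vz in auto)
    hence nz: "vn (N v) s = 0" using N5[OF v] by simp
    show ?thesis
    proof (rule eq_vecI)
      show "dim_vec (N v) = dim_vec v" using N1[of v] v by simp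
      fix r assume "r < dim_vec v"
      hence r: "r < m" using v by simp
      show "N v $ r = v $ r"
      proof (cases "r < s")
        case True thus ?thesis using N2 by simp
      next
        case False
        thus ?thesis using vn_zero_iff[OF nz, of r] N1[of v] r vz by simp
      qed
    qed
  qed
  have cand: "cand_enum C l \<in> C" if "l < b" for l
    unfolding cand_enum_def using that C(2) finC by (metis nth_mem set_sorted_list_of_set length_sorted_list_of_set)
  have candT: "s \<le> cand_enum C l" "cand_enum C l < n" if "l < b" for l
    using cand[OF that] C(1) stn by auto
  have Wc: "mat_adj Q * A * perm_mat n p \<in> carrier_mat m n"
    using aQ A by (intro mult_carrier_mat) (auto simp: perm_mat_def)
  have Wcol: "xc A Q p j $ (s + i) = B $$ (i, l)" if "l < b" "i < q" "j = cand_enum C l" for i l j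
  proof -
    have jn: "j < n" "p j < n" using candT that pn by auto
    have "B $$ (i, l) = (mat_adj Q * A * perm_mat (dim_col A) p) $$ (s + i, j)"
      unfolding B_def cand_mat_def Let_def using that A C(2) q_def by simp
    also have "\<dots> = col (mat_adj Q * A * perm_mat n p) j $ (s + i)"
      using that jn mq carrier_matD[OF A] carrier_matD[OF Wc] by simp
    also have "\<dots> = xc A Q p j $ (s + i)" unfolding xc_def using perm_col[of A m n j p Q, OF A jn(1) jn(2) Q] by simp
    finally show ?thesis by simp
  qed
  have lastB: "vec_last (xc A Q p (cand_enum C l)) q = col B l" if "l < b" for l
  proof (rule eq_vecI)
    fix i assume "i < dim_vec (col B l)"
    hence i: "i < q" using Bc by simp
    have "vec_last (xc A Q p (cand_enum C l)) q $ i = xc A Q p (cand_enum C l) $ (s + i)"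
      by (rule vec_last_idx[OF i]) (use xc_carrier[OF Q] vq in auto)
    also have "\<dots> = col B l $ i" using Wcol[OF that i refl] Bc i that by simp
    finally show "vec_last (xc A Q p (cand_enum C l)) q $ i = col B l $ i" .
  qed (use Bc in simp)
  define zz where "zz l = Pc *\<^sub>v col B (\<sigma> l)" for l
  have colRz: "col R l = Suf *\<^sub>v zz l" if "l < b" for l
    unfolding zz_def using colR that HsSplit Sufc Pcc Bc sig
    by (metis assoc_mult_mat_vec col_carrier_vec)
  have zzc: "zz l \<in> carrier_vec q" for l unfolding zz_def using carrier_matD[OF Pcc] by (intro carrier_vecI) simp
  have Rkeep: "col R l $ r = zz l $ r" if "l < b" "r < c" for l r
    using Sufp zzc[of l] colRz[OF that(1)] that(2) unfolding pres_def by auto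
  have Rvn: "vn (col R l) i = vn (zz l) i" if "l < b" "i \<le> c" for l i
    using pres_mono[OF that(2) Sufp] zzc[of l] colRz[OF that(1)] unfolding pres_def by auto
  have yc: "xc A Q p1 (s + l) = xc A Q p (cand_enum C (\<sigma> l))" if "l < b" for l
    unfolding xc_def using p1a that by simp
  have lastN: "vec_last (xc A Q1 p1 (s + l)) q = zz l" if "l < b" for l
    unfolding xQ1 N3 yc[OF that] zz_def using lastB sig that by simp
  have noncand: "vn (xc A Q p1 l) s \<le> max \<delta> \<mu>" if "s + b \<le> l" "l < n" for l
  proof (cases "l < s + t")
    case True
    have "p1 l \<in> p ` (T - C)" using p1b True that unfolding T_def bij_betw_def by auto
    then obtain j where j: "j \<in> T - C" "p1 l = p j" by auto
    have "xc A Q p1 l = xc A Q p j" unfolding xc_def using j by simp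
    moreover have "vn (xc A Q p j) s \<le> \<delta>" using dl j unfolding T_def by blast
    ultimately show ?thesis by simp
  next
    case False
    hence pl: "p1 l = p l" using p1c by auto
    have aaQ: "mat_adj (mat_adj Q) * mat_adj Q = 1\<^sub>m m"
      using mat_mult_left_right_inverse[OF aQ Q Qu] by simp
    have "vn (xc A Q p1 l) s \<le> vn (xc A Q p1 l) 0" by (rule vn_mono) simp
    also have "\<dots> = vn (col A (p l)) 0" unfolding xc_def pl
      by (rule isometry[OF aQ aaQ]) (use A in auto)
    also have "\<dots> = colnorm2 A 0 (p l)" using colnorm2_vn[of "p l" A 0] pn that A by auto
    also have "\<dots> \<le> \<mu>" using mu False that by auto
    finally show ?thesis by simp
  qed
  have p1n: "\<forall>l<n. p1 l < n"
  proof (intro allI impI)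
    fix l assume l: "l < n"
    show "p1 l < n"
    proof (cases "l < s \<or> s + t \<le> l")
      case True thus ?thesis using p1c pn l by auto
    next
      case False
      show ?thesis
      proof (cases "l < s + b")
        case True
        then obtain l' where l': "l = s + l'" "l' < b" using False by (intro that[of "l - s"]) auto
        thus ?thesis using p1a candT[of "\<sigma> l'"] sig pn by auto
      next
        case F2: False
        have "p1 l \<in> p ` (T - C)" using p1b False F2 unfolding T_def bij_betw_def by auto
        thus ?thesis using pn C stn unfolding T_def by auto
      qed
    qed
  qed
  have zeros: "\<forall>j<s+c. \<forall>r. j < r \<and> r < m \<longrightarrow> xc A Q1 p1 j $ r = 0"
  proof (intro allI impI)
    fix j r assume j: "j < s + c" and r: "j < r \<and> r < m"
    show "xc A Q1 p1 j $ r = 0"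
    proof (cases "j < s")
      case True
      have e: "xc A Q p1 j = xc A Q p j" unfolding xc_def using p1c True by simp
      have "N (xc A Q p j) = xc A Q p j" by (rule N6) (use xc_carrier[OF Q] z True in auto)
      thus ?thesis unfolding xQ1 e using z True r by simp
    next
      case False
      then obtain i' where i': "j = s + i'" "i' < c" using j by (intro that[of "j - s"]) auto
      obtain r' where r': "r = s + r'" "i' < r'" "r' < q" using r i' mq by (intro that[of "r - s"]) auto
      have ib: "i' < b" using i' cb by simp
      have "xc A Q1 p1 j $ r = vec_last (xc A Q1 p1 j) q $ r'"
        using vec_last_idx[OF r'(3), of "xc A Q1 p1 j" s] vq[OF xc_carrier[OF Q1c]] r'(1) by simp
      also have "\<dots> = zz i' $ r'" using lastN[OF ib] i' by simp
      also have "\<dots> = 0"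
      proof (cases "r' < c")
        case True
        have "zz i' $ r' = col R i' $ r'" using Rkeep[OF ib True] by simp
        also have "\<dots> = R $$ (r', i')" using R r' ib by simp
        also have "\<dots> = 0" using Rz i' cd r' by auto
        finally show ?thesis .
      next
        case False
        have "vn (col R i') c = 0" by (rule vn_zero) (use R Rz i' cd ib in auto)
        hence "vn (zz i') c = 0" using Rvn[OF ib, of c] by simp
        thus ?thesis using vn_zero_iff[of "zz i'" c r'] False zzc[of i'] r' by simp
      qed
      finally show ?thesis .
    qed
  qed
  have diagR: "(cmod (R $$ (c-1, c-1)))\<^sup>2 \<le> (cmod (R $$ (i', i')))\<^sup>2" if "i' < c" for i'
  proof -
    have "(cmod (R $$ (c-1, c-1)))\<^sup>2 = (cmod (col R (c-1) $ (c-1)))\<^sup>2" using R c1 cb by simp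
    also have "\<dots> \<le> vn (col R (c-1)) (c-1)" by (rule vn_term) (use R c1 cb in auto)
    also have "\<dots> \<le> vn (col R (c-1)) i'" by (rule vn_mono) (use that in auto)
    also have "\<dots> \<le> (cmod (R $$ (i', i')))\<^sup>2"
    proof -
      have "i' < d" "i' \<le> c - 1" "c - 1 < b" using that cd cb c1 by auto
      thus ?thesis using Rg by blast
    qed
    finally show ?thesis .
  qed
  have g3new: "\<forall>j<s+c. \<forall>l. j \<le> l \<and> l < n \<longrightarrow> vn (xc A Q1 p1 l) j \<le> (cmod (xc A Q1 p1 j $ j))\<^sup>2"
  proof (intro allI impI)
    fix j l assume j: "j < s + c" and l: "j \<le> l \<and> l < n"
    show "vn (xc A Q1 p1 l) j \<le> (cmod (xc A Q1 p1 j $ j))\<^sup>2"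
    proof (cases "j < s")
      case True
      have e: "xc A Q p1 j = xc A Q p j" unfolding xc_def using p1c True by simp
      have "N (xc A Q p j) = xc A Q p j" by (rule N6) (use xc_carrier[OF Q] z True in auto)
      hence dj: "xc A Q1 p1 j $ j = xc A Q p j $ j" unfolding xQ1 e by simp
      have "vn (xc A Q1 p1 l) j = vn (xc A Q p1 l) j" unfolding xQ1 by (rule N5) (use xc_carrier[OF Q] True in auto)
      also have "\<dots> \<le> (cmod (xc A Q p j $ j))\<^sup>2"
      proof -
        obtain j' where j': "xc A Q p1 l = xc A Q p j'" "j \<le> j'" "j' < n"
        proof (cases "l < s \<or> s + t \<le> l")
          case True thus ?thesis using that[of l] p1c l unfolding xc_def by auto
        next
          case False
          show ?thesis
          proof (cases "l < s + b")
            case True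
            then obtain l' where l': "l = s + l'" "l' < b" using False by (intro that[of "l - s"]) auto
            thus ?thesis using that[of "cand_enum C (\<sigma> l')"] yc candT[of "\<sigma> l'"] sig \<open>j < s\<close> by auto
          next
            case F2: False
            have "p1 l \<in> p ` (T - C)" using p1b False F2 unfolding T_def bij_betw_def by auto
            then obtain j' where "j' \<in> T - C" "p1 l = p j'" by auto
            thus ?thesis using that[of j'] \<open>j < s\<close> stn unfolding xc_def T_def by auto
          qed
        qed
        thus ?thesis using g3 True by auto
      qed
      finally show ?thesis using dj by simp
    next
      case False
      then obtain i' where i': "j = s + i'" "i' < c" using j by (intro that[of "j - s"]) auto
      have ib: "i' < b" using i' cb by simp
      have dj: "xc A Q1 p1 j $ j = R $$ (i', i')"
      proof -
        have "xc A Q1 p1 j $ j = vec_last (xc A Q1 p1 j) q $ i'"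
          using vec_last_idx[of i' q "xc A Q1 p1 j" s] vq[OF xc_carrier[OF Q1c]] i' cb by simp
        also have "\<dots> = zz i' $ i'" using lastN[OF ib] i' by simp
        also have "\<dots> = col R i' $ i'" using Rkeep[OF ib i'(2)] by simp
        also have "\<dots> = R $$ (i', i')" using R ib i' cb by simp
        finally show ?thesis .
      qed
      have "vn (xc A Q1 p1 l) j = vn (Pc *\<^sub>v vec_last (xc A Q p1 l) q) i'" unfolding xQ1 i' by (rule N4)
      also have "\<dots> \<le> (cmod (R $$ (i', i')))\<^sup>2"
      proof (cases "l < s + b")
        case True
        then obtain l' where l': "l = s + l'" "i' \<le> l'" "l' < b" using l i' by (intro that[of "l - s"]) auto
        have "Pc *\<^sub>v vec_last (xc A Q p1 l) q = zz l'" unfolding zz_def l'(1) yc[OF l'(3)]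
          using lastB sig l' by simp
        hence "vn (Pc *\<^sub>v vec_last (xc A Q p1 l) q) i' = vn (col R l') i'" using Rvn[OF l'(3), of i'] i' by simp
        also have "\<dots> \<le> (cmod (R $$ (i', i')))\<^sup>2" using Rg i' cd l' by auto
        finally show ?thesis .
      next
        case False
        have "vn (Pc *\<^sub>v vec_last (xc A Q p1 l) q) i' \<le> vn (Pc *\<^sub>v vec_last (xc A Q p1 l) q) 0" by (rule vn_mono) simp
        also have "\<dots> = vn (vec_last (xc A Q p1 l) q) 0" by (rule P0) simp
        also have "\<dots> = vn (xc A Q p1 l) s" using vn_last[OF vq[OF xc_carrier[OF Q, of A p1 l]], of 0] by simp
        also have "\<dots> \<le> max \<delta> \<mu>" using noncand False l by simp
        also have "\<dots> \<le> (cmod (R $$ (c-1, c-1)))\<^sup>2" by (rule c3)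
        also have "\<dots> \<le> (cmod (R $$ (i', i')))\<^sup>2" by (rule diagR[OF i'(2)])
        finally show ?thesis .
      qed
      finally show ?thesis using dj by simp
    qed
  qed
  show ?thesis using Q1c Q1u p1n zeros g3new cb mq by simp
qed



definition cinv :: "complex mat \<Rightarrow> nat \<Rightarrow> cc_state \<Rightarrow> bool" where
  "cinv A k st \<longleftrightarrow> (case st of (p, Q, s, t, \<mu>, fc) \<Rightarrow>
   Q \<in> carrier_mat (dim_row A) (dim_row A) \<and> mat_adj Q * Q = 1\<^sub>m (dim_row A) \<and> s \<le> dim_row A
   \<and> s + t \<le> dim_col A \<and> (\<forall>l<dim_col A. p l < dim_col A) \<and>
   (\<forall>j<s. \<forall>r. j < r \<and> r < dim_row A \<longrightarrow> xc A Q p j $ r = 0) \<and>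
   (\<forall>j<s. \<forall>l. j \<le> l \<and> l < dim_col A \<longrightarrow> vn (xc A Q p l) j \<le> (cmod (xc A Q p j $ j))\<^sup>2) \<and>
   (s < k \<longrightarrow> (\<forall>l. s + t \<le> l \<and> l < dim_col A \<longrightarrow> colnorm2 A 0 (p l) \<le> \<mu>)))"

lemma cinv_init: "cinv A k (id, 1\<^sub>m (dim_row A), 0, dim_col A, 0, True)"
  unfolding cinv_def by simp

lemma expand_ok:
  assumes A: "A \<in> carrier_mat m n"
  and Q: "Q \<in> carrier_mat m m" and Qu: "mat_adj Q * Q = 1\<^sub>m m" and sm: "s \<le> m" and stn: "s + t \<le> n"
  and pn: "\<forall>l<n. p l < n"
  and z: "\<forall>j<s. \<forall>r. j < r \<and> r < m \<longrightarrow> xc A Q p j $ r = 0"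
  and g3: "\<forall>j<s. \<forall>l. j \<le> l \<and> l < n \<longrightarrow> vn (xc A Q p l) j \<le> (cmod (xc A Q p j $ j))\<^sup>2"
  and E: "let M = M0; Utr = {s+t..<n}; nrm = (\<lambda>j. colnorm2 A 0 (p j));
              U0 = {j\<in>Utr. M \<le> nrm j};
              U = (if U0 = {} \<and> Utr \<noteq> {} then {j\<in>Utr. 0.9 * Max (nrm ` Utr) \<le> nrm j} else U0)
          in \<exists>p'. (\<forall>l. l < s + t \<or> n \<le> l \<longrightarrow> p' l = p l)
               \<and> bij_betw p' {s+t..<s+t+card U} (p ` U)
               \<and> bij_betw p' {s+t+card U..<n} (p ` (Utr - U))
               \<and> st' = (p', Q, s, t + card U,
                        (if Utr - U = {} then 0 else Max (nrm ` (Utr - U))), False)"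
  shows "cinv A k st'"
proof -
  define Utr where "Utr = {s+t..<n}"
  define nrm where "nrm = (\<lambda>j. colnorm2 A 0 (p j))"
  define U0 where "U0 = {j\<in>Utr. M0 \<le> nrm j}"
  define U where "U = (if U0 = {} \<and> Utr \<noteq> {} then {j\<in>Utr. 0.9 * Max (nrm ` Utr) \<le> nrm j} else U0)"
  have "\<exists>p'. (\<forall>l. l < s + t \<or> n \<le> l \<longrightarrow> p' l = p l)
               \<and> bij_betw p' {s+t..<s+t+card U} (p ` U)
               \<and> bij_betw p' {s+t+card U..<n} (p ` (Utr - U))
               \<and> st' = (p', Q, s, t + card U,
                        (if Utr - U = {} then 0 else Max (nrm ` (Utr - U))), False)"
    using E unfolding Let_def U_def U0_def nrm_def Utr_def .
  then obtain p' where pp: "\<forall>l. l < s + t \<or> n \<le> l \<longrightarrow> p' l = p l"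
    and b1: "bij_betw p' {s+t..<s+t+card U} (p ` U)"
    and b2: "bij_betw p' {s+t+card U..<n} (p ` (Utr - U))"
    and st: "st' = (p', Q, s, t + card U, (if Utr - U = {} then 0 else Max (nrm ` (Utr - U))), False)"
    by blast
  have UU: "U \<subseteq> Utr" unfolding U_def U0_def by auto
  have cU: "card U \<le> n - (s + t)" using card_mono[OF _ UU] unfolding Utr_def by simp
  have mA: "dim_row A = m" "dim_col A = n" using A by auto
  have im1: "p' l \<in> p ` U" if "s + t \<le> l" "l < s + t + card U" for l
    using b1 that unfolding bij_betw_def by auto
  have im2: "p' l \<in> p ` (Utr - U)" if "s + t + card U \<le> l" "l < n" for l
    using b2 that unfolding bij_betw_def by auto
  have big: "\<exists>j. s + t \<le> j \<and> j < n \<and> p' l = p j" if l12: "s + t \<le> l" "l < n" for l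
  proof (cases "l < s + t + card U")
    case True
    then obtain j where j: "j \<in> U" "p' l = p j" using im1[OF l12(1) True] by auto
    hence "s + t \<le> j" "j < n" using UU unfolding Utr_def by auto
    thus ?thesis using j(2) by blast
  next
    case False
    then obtain j where j: "j \<in> Utr - U" "p' l = p j" using im2[of l] l12 by auto
    hence "s + t \<le> j" "j < n" unfolding Utr_def by auto
    thus ?thesis using j(2) by blast
  qed
  have same: "xc A Q p' l = xc A Q p l" if "l < s + t" for l unfolding xc_def using pp that by simp
  show ?thesis unfolding st cinv_def mA prod.case
  proof (intro conjI allI impI)
    show "Q \<in> carrier_mat m m" "mat_adj Q * Q = 1\<^sub>m m" "s \<le> m" by fact+
    show "s + (t + card U) \<le> n" using cU stn by simp
    show "p' l < n" if "l < n" for l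
    proof (cases "l < s + t")
      case True thus ?thesis using pp pn that by auto
    next
      case False thus ?thesis using big[of l] that pn by auto
    qed
    show "xc A Q p' j $ r = 0" if "j < s" "j < r \<and> r < m" for j r
      using same[of j] z that by simp
    show "vn (xc A Q p' l) j \<le> (cmod (xc A Q p' j $ j))\<^sup>2" if jl: "j < s" "j \<le> l \<and> l < n" for j l
    proof (cases "l < s + t")
      case True thus ?thesis using same[of l] same[of j] g3 jl by simp
    next
      case False
      then obtain j' where "s + t \<le> j'" "j' < n" "p' l = p j'" using big[of l] jl by auto
      moreover hence "xc A Q p' l = xc A Q p j'" unfolding xc_def by simp
      ultimately show ?thesis using same[of j] g3 jl by simp
    qed
    show "colnorm2 A 0 (p' l) \<le> (if Utr - U = {} then 0 else Max (nrm ` (Utr - U)))"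
      if lk: "s < k" "s + (t + card U) \<le> l \<and> l < n" for l
    proof -
      obtain j where j: "j \<in> Utr - U" "p' l = p j" using im2[of l] lk by auto
      have ne: "Utr - U \<noteq> {}" using j by auto
      have "nrm j \<le> Max (nrm ` (Utr - U))" using j unfolding Utr_def by (intro Max_ge) auto
      thus ?thesis using ne j unfolding nrm_def by simp
    qed
  qed
qed



lemma cycle_ok:
  assumes A: "A \<in> carrier_mat m n" and inv: "cinv A k (p,Q,s,t,\<mu>,fc)" and sk: "s < k"
    and cyc: "cceqr_cycle A k \<rho> (p,Q,s,t,\<mu>,fc) st'"
  shows "cinv A k st'"
proof -
  have mA: "dim_row A = m" "dim_col A = n" using A by auto
  define T where "T = {s..<s+t}"
  define b where "b = nat (1 + \<lfloor>\<rho> * (real t - 1)\<rfloor>)"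
  define g where "g = cc_gamma A p Q s t"
  obtain C \<delta> t1 \<sigma> Hs R p1 c Q1 s1 t2 where
     hC1: "C \<subseteq> T" and hC2: "card C = b" and hC3: "\<forall>x\<in>C. \<forall>j\<in>T - C. g j \<le> g x"
     and hd: "\<delta> = (if T - C = {} then 0 else Max (g ` (T - C)))"
     and ht1: "t1 = (if fc then b else t)"
     and hgb: "gb_steps (cand_mat A p Q s C) (min (m - s) b) \<sigma> Hs R"
     and hp1a: "\<forall>l<b. p1 (s + l) = p (cand_enum C (\<sigma> l))"
     and hp1b: "bij_betw p1 {s+b..<s+t} (p ` (T - C))"
     and hp1c: "\<forall>l. l < s \<or> s + t \<le> l \<longrightarrow> p1 l = p l"
     and hne: "{i\<in>{1..min (m - s) b}. max \<delta> \<mu> \<le> (cmod (R $$ (i-1, i-1)))\<^sup>2} \<noteq> {}"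
     and hc: "c = Max {i\<in>{1..min (m - s) b}. max \<delta> \<mu> \<le> (cmod (R $$ (i-1, i-1)))\<^sup>2}"
     and hQ1: "Q1 = Q * four_block_mat (1\<^sub>m s) (0\<^sub>m s (m - s)) (0\<^sub>m (m - s) s)
                 (foldr (*) (take c Hs) (1\<^sub>m (m - s)))"
     and hs1: "s1 = s + c" and ht2: "t2 = t1 - c"
     and hst: "if k \<le> s1 then st' = (p1, Q1, s1, t2, \<mu>, False)
         else
         (let M = (if t2 = 0 then 0 else Max (cc_gamma A p1 Q1 s1 t2 ` {s1..<s1+t2}));
              Utr = {s1+t2..<n}; nrm = (\<lambda>j. colnorm2 A 0 (p1 j));
              U0 = {j\<in>Utr. M \<le> nrm j};
              U = (if U0 = {} \<and> Utr \<noteq> {} then {j\<in>Utr. 0.9 * Max (nrm ` Utr) \<le> nrm j} else U0)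
          in \<exists>p'. (\<forall>l. l < s1 + t2 \<or> n \<le> l \<longrightarrow> p' l = p1 l)
               \<and> bij_betw p' {s1+t2..<s1+t2+card U} (p1 ` U)
               \<and> bij_betw p' {s1+t2+card U..<n} (p1 ` (Utr - U))
               \<and> st' = (p', Q1, s1, t2 + card U,
                        (if Utr - U = {} then 0 else Max (nrm ` (Utr - U))), False))"
    using cyc unfolding cceqr_cycle_def Let_def mA T_def b_def g_def prod.case
    apply (elim exE conjE)
    apply (rule that[unfolded T_def b_def g_def Let_def])
                   apply assumption+
    done
  from inv have Q: "Q \<in> carrier_mat m m" and Qu: "mat_adj Q * Q = 1\<^sub>m m" and sm: "s \<le> m"
    and stn: "s + t \<le> n" and pn: "\<forall>l<n. p l < n"
    and z: "\<forall>j<s. \<forall>r. j < r \<and> r < m \<longrightarrow> xc A Q p j $ r = 0"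
    and g3: "\<forall>j<s. \<forall>l. j \<le> l \<and> l < n \<longrightarrow> vn (xc A Q p l) j \<le> (cmod (xc A Q p j $ j))\<^sup>2"
    and mu: "\<forall>l. s + t \<le> l \<and> l < n \<longrightarrow> colnorm2 A 0 (p l) \<le> \<mu>"
    using sk unfolding cinv_def mA prod.case by auto
  have Wc: "mat_adj Q * A * perm_mat n p \<in> carrier_mat m n"
    using Q A by (intro mult_carrier_mat) (auto simp: perm_mat_def)
  have gx: "g j = vn (xc A Q p j) s" if "j \<in> T" for j
  proof -
    have j: "j < s + t" "j < n" using that stn unfolding T_def by auto
    have "g j = colnorm2 (mat_adj Q * A * perm_mat n p) s j" unfolding g_def cc_gamma_def using j mA by simp
    also have "\<dots> = vn (col (mat_adj Q * A * perm_mat n p) j) s"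
      by (rule colnorm2_vn) (use carrier_matD[OF Wc] j in simp)
    also have "\<dots> = vn (xc A Q p j) s" unfolding xc_def using perm_col[of A m n j p Q, OF A j(2) _ Q] pn j by simp
    finally show ?thesis .
  qed
  have finT: "finite T" unfolding T_def by simp
  have dl: "\<forall>j \<in> {s..<s+t} - C. vn (xc A Q p j) s \<le> \<delta>"
  proof
    fix j assume j: "j \<in> {s..<s+t} - C"
    hence "T - C \<noteq> {}" unfolding T_def by auto
    hence "\<delta> = Max (g ` (T - C))" using hd by simp
    moreover have "g j \<le> Max (g ` (T - C))" using j finT unfolding T_def by (intro Max_ge) auto
    ultimately show "vn (xc A Q p j) s \<le> \<delta>" using gx[of j] j unfolding T_def by simp
  qed
  define S where "S = {i\<in>{1..min (m - s) b}. max \<delta> \<mu> \<le> (cmod (R $$ (i-1, i-1)))\<^sup>2}"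
  have cS: "c \<in> S" unfolding hc S_def[symmetric] using hne unfolding S_def by (intro Max_in) auto
  hence c1: "1 \<le> c" and c2: "c \<le> min (m - s) b" and c3: "max \<delta> \<mu> \<le> (cmod (R $$ (c-1, c-1)))\<^sup>2"
    unfolding S_def by auto
  have post: "Q1 \<in> carrier_mat m m \<and> mat_adj Q1 * Q1 = 1\<^sub>m m \<and> s + c \<le> m \<and> (\<forall>l<n. p1 l < n) \<and>
     (\<forall>j<s+c. \<forall>r. j < r \<and> r < m \<longrightarrow> xc A Q1 p1 j $ r = 0) \<and>
     (\<forall>j<s+c. \<forall>l. j \<le> l \<and> l < n \<longrightarrow> vn (xc A Q1 p1 l) j \<le> (cmod (xc A Q1 p1 j $ j))\<^sup>2)"
    by (rule commit_ok[OF A Q Qu sm stn pn z g3 mu hC1[unfolded T_def] hC2 dl hgb hp1a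
          hp1b[unfolded T_def] hp1c c1 c2 c3 hQ1])
  have bt: "b \<le> t" using hC1 hC2 card_mono[OF finT hC1] unfolding T_def by simp
  have t1: "c \<le> t1" "t1 \<le> t" using c2 bt ht1 by auto
  have s1t2: "s1 + t2 \<le> n" using hs1 ht2 t1 stn by simp
  show ?thesis
  proof (cases "k \<le> s1")
    case True
    hence st: "st' = (p1, Q1, s1, t2, \<mu>, False)" using hst by simp
    show ?thesis unfolding st cinv_def mA prod.case using post s1t2 True hs1 by auto
  next
    case False
    have E: "let M = (if t2 = 0 then 0 else Max (cc_gamma A p1 Q1 s1 t2 ` {s1..<s1+t2}));
              Utr = {s1+t2..<n}; nrm = (\<lambda>j. colnorm2 A 0 (p1 j));
              U0 = {j\<in>Utr. M \<le> nrm j};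
              U = (if U0 = {} \<and> Utr \<noteq> {} then {j\<in>Utr. 0.9 * Max (nrm ` Utr) \<le> nrm j} else U0)
          in \<exists>p'. (\<forall>l. l < s1 + t2 \<or> n \<le> l \<longrightarrow> p' l = p1 l)
               \<and> bij_betw p' {s1+t2..<s1+t2+card U} (p1 ` U)
               \<and> bij_betw p' {s1+t2+card U..<n} (p1 ` (Utr - U))
               \<and> st' = (p', Q1, s1, t2 + card U,
                        (if Utr - U = {} then 0 else Max (nrm ` (Utr - U))), False)"
      using hst[unfolded if_not_P[OF False]] .
    show ?thesis
      by (rule expand_ok[OF A _ _ _ s1t2 _ _ _ E]) (use post hs1 in auto)
  qed
qed

lemma reach_ok: assumes A: "A \<in> carrier_mat m n" and r: "cceqr_reach A k \<rho> st" shows "cinv A k st"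
  using r
proof (induction rule: cceqr_reach.induct)
  case cc_init thus ?case by (rule cinv_init)
next
  case (cc_step p Q s t \<mu> fc st')
  thus ?case using cycle_ok[OF A] by blast
qed



theorem theorem3p2:
  fixes A :: "complex mat" and m n k :: nat and \<rho> :: real and P :: "complex mat"
  assumes "A \<in> carrier_mat m n"
    and "1 \<le> k" and "k \<le> min m n"
    and "0 < \<rho>" and "\<rho> < 1"
    and "cceqr_output A k \<rho> P"
  shows "\<exists>Q. Q \<in> carrier_mat m m \<and> unitary_mat Q \<and> GB_form k (mat_adj Q * A * P)"
proof -
  have A: "A \<in> carrier_mat m n" by fact
  have mA: "dim_row A = m" "dim_col A = n" using A by auto
  obtain p Q s t \<mu> fc where r: "cceqr_reach A k \<rho> (p, Q, s, t, \<mu>, fc)" and ks: "k \<le> s"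
    and P: "P = perm_mat n p"
    using assms(6) unfolding cceqr_output_def mA by blast
  have inv: "cinv A k (p, Q, s, t, \<mu>, fc)" by (rule reach_ok[OF A r])
  from inv have Q: "Q \<in> carrier_mat m m" and Qu: "mat_adj Q * Q = 1\<^sub>m m"
    and pn: "\<forall>l<n. p l < n"
    and z: "\<forall>j<s. \<forall>r. j < r \<and> r < m \<longrightarrow> xc A Q p j $ r = 0"
    and g3: "\<forall>j<s. \<forall>l. j \<le> l \<and> l < n \<longrightarrow> vn (xc A Q p l) j \<le> (cmod (xc A Q p j $ j))\<^sup>2"
    unfolding cinv_def mA prod.case by auto
  define W where "W = mat_adj Q * A * P"
  have Wc: "W \<in> carrier_mat m n" unfolding W_def P
    using Q A by (intro mult_carrier_mat) (auto simp: perm_mat_def)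
  have colW: "col W j = xc A Q p j" if "j < n" for j
    unfolding W_def P xc_def using perm_col[of A m n j p Q, OF A that _ Q] pn that by simp
  have Wij: "W $$ (i, j) = xc A Q p j $ i" if "i < m" "j < n" for i j
    using colW[OF that(2)] that carrier_matD[OF Wc] by (metis index_col)
  have cn: "colnorm2 W i j = vn (xc A Q p j) i" if "j < n" for i j
    using colnorm2_vn[of j W i] colW[OF that] that carrier_matD[OF Wc] by simp
  have uQ: "unitary_mat Q" unfolding unitary_mat_def using Q Qu by auto
  have GB: "GB_form k W" unfolding GB_form_def
  proof (intro conjI allI impI)
    show "k \<le> min (dim_row W) (dim_col W)" using assms(3) carrier_matD[OF Wc] by simp
    fix j i assume "j < k" "j < i \<and> i < dim_row W"
    thus "W $$ (i, j) = 0" using Wij z ks assms(3) carrier_matD[OF Wc] by auto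
  next
    fix i assume ik: "i < k"
    have im: "i < m" "i < n" "i < s" using ik assms(3) ks by auto
    define x where "x = cmod (W $$ (i, i))"
    have le: "colnorm2 W i j \<le> x\<^sup>2" if "j \<in> {i..<n}" for j
      using g3 im that cn[of j i] Wij[of i i] unfolding x_def by auto
    have ge: "x\<^sup>2 \<le> colnorm2 W i i"
      using vn_term[of i "xc A Q p i"] xc_carrier[OF Q, of A p i] cn[of i i] Wij[of i i] im
      unfolding x_def by simp
    have eq: "colnorm2 W i i = x\<^sup>2" using le[of i] ge im by simp
    have x0: "0 \<le> x" unfolding x_def by simp
    show "cmod (W $$ (i, i)) = Max ((\<lambda>j. sqrt (colnorm2 W i j)) ` {i..<dim_col W})"
      unfolding x_def[symmetric] carrier_matD(2)[OF Wc]
    proof (rule Max_eqI[symmetric])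
      show "finite ((\<lambda>j. sqrt (colnorm2 W i j)) ` {i..<n})" by simp
      show "\<And>y. y \<in> (\<lambda>j. sqrt (colnorm2 W i j)) ` {i..<n} \<Longrightarrow> y \<le> x"
        using le x0 by (auto intro: real_le_lsqrt simp: real_sqrt_le_iff)
      show "x \<in> (\<lambda>j. sqrt (colnorm2 W i j)) ` {i..<n}"
        using eq x0 im by (intro image_eqI[of _ _ i]) auto
    qed
  qed
  show ?thesis using Q uQ GB unfolding W_def by blast
qed

end
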